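(* $$\sum_{k=1}^\infty\frac{18675k^2+7627k+670}{(4k+1)(-8)^k\binom{4k}k}=-30-192\log2.$$ *)

theory Defs
  imports Complex_Main
begin

end

theory Submission
  imports Defs "HOL-Analysis.Analysis"
begin

lemma sums_k12:
  fixes z :: real assumes "norm z < 1"
  shows "(\<lambda>n. of_nat (Suc n) * of_nat (Suc (Suc n)) * z ^ n) sums (2 / (1 - z)^3)"
proof -
  have "(\<lambda>n. diffs (\<lambda>n. of_nat (Suc n)) n * z^n) sums (2 / (1 - z)^3)"
  proof (rule termdiffs_sums_strong[where K=1])
    fix z :: real assume "norm z < 1"
    thus "(\<lambda>n. of_nat (Suc n) * z^n) sums (1 / (1 - z)^2)" by (rule geometric_deriv_sums)
  next
    have ne: "1 - z \<noteq> 0" using assms by auto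
    show "((\<lambda>z. 1/(1-z)^2) has_field_derivative 2/(1-z)^3) (at z)"
      apply (rule derivative_eq_intros refl)+
      using ne apply simp
      using ne apply (simp add: divide_simps)
      by algebra
  qed (use assms in auto)
  thus ?thesis unfolding diffs_def by (simp add: mult_ac)
qed

lemma sums_k0:
  fixes t :: real assumes "norm t < 1"
  shows "(\<lambda>n. t ^ Suc n) sums (t / (1 - t))"
  using sums_mult[OF geometric_sums[OF assms], of t] by (simp add: field_simps)

lemma sums_k1:
  fixes t :: real assumes "norm t < 1"
  shows "(\<lambda>n. real (Suc n) * t ^ Suc n) sums (t / (1 - t)^2)"
  using sums_mult[OF geometric_deriv_sums[OF assms], of t] by (simp add: field_simps)

lemma sums_k2:
  fixes t :: real assumes "norm t < 1"
  shows "(\<lambda>n. (real (Suc n))^2 * t ^ Suc n) sums (t * (1 + t) / (1 - t)^3)"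
proof -
  have "1 - t \<noteq> 0" using assms by auto
  have "(\<lambda>n. t * (of_nat (Suc n) * of_nat (Suc (Suc n)) * t ^ n - real (Suc n) * t ^ n)) sums
        (t * (2 / (1 - t)^3 - 1 / (1 - t)^2))"
    by (intro sums_mult sums_diff sums_k12 geometric_deriv_sums assms)
  moreover have "t * (2 / (1 - t)^3 - 1 / (1 - t)^2) = t * (1 + t) / (1 - t)^3"
  proof -
    have "1 / (1 - t)^2 = (1 - t) / (1 - t)^3"
      using \<open>1 - t \<noteq> 0\<close> by (simp add: power2_eq_square power3_eq_cube)
    then have "t * (2 / (1 - t)^3 - 1 / (1 - t)^2) = t * ((2 - (1 - t)) / (1 - t)^3)"
      by (simp only: diff_divide_distrib)
    moreover have "2 - (1 - t) = 1 + t" by simp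
    ultimately show ?thesis by (simp only: times_divide_eq_right)
  qed
  moreover have "(\<lambda>n. t * (of_nat (Suc n) * of_nat (Suc (Suc n)) * t ^ n - real (Suc n) * t ^ n))
     = (\<lambda>n. (real (Suc n))^2 * t ^ Suc n)"
    by (rule ext) (simp add: algebra_simps power2_eq_square)
  ultimately show ?thesis by simp
qed

definition GG :: "real \<Rightarrow> real" where
  "GG t = 18675 * (t * (1 + t) / (1 - t)^3) + 7627 * (t / (1 - t)^2) + 670 * (t / (1 - t))"

lemma sums_P:
  fixes t :: real assumes "norm t < 1"
  shows "(\<lambda>n. (18675 * real (Suc n)^2 + 7627 * real (Suc n) + 670) * t ^ Suc n) sums GG t"
proof -
  have "(\<lambda>n. 18675 * ((real (Suc n))^2 * t ^ Suc n) + 7627 * (real (Suc n) * t ^ Suc n) + 670 * t ^ Suc n) sums GG t"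
    unfolding GG_def by (intro sums_add sums_mult sums_k0 sums_k1 sums_k2 assms)
  then show ?thesis by (simp add: algebra_simps)
qed

lemma beta_int:
  "((\<lambda>x. x^k * (1-x)^(3*k)) has_integral (1 / ((4*real k+1) * real ((4*k) choose k)))) {0..1::real}"
proof -
  have "((\<lambda>t. t powr (real k + 1 - 1) * (1 - t) powr (real (3*k) + 1 - 1)) has_integral
         Beta (real k + 1) (real (3*k) + 1)) {0..1}"
    by (rule has_integral_Beta_real) auto
  then have h: "((\<lambda>t. t powr real k * (1 - t) powr real (3*k)) has_integral
         Beta (real k + 1) (real (3*k) + 1)) {0..1}" by simp
  have i: "((\<lambda>x. x^k * (1-x)^(3*k)) has_integral Beta (real k + 1) (real (3*k) + 1)) {0..1::real}"
  proof (rule has_integral_spike_finite[OF _ _ h, of "{0,1}"])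
    fix x :: real assume "x \<in> {0..1} - {0,1}"
    then have "x > 0" "1 - x > 0" by auto
    then show "x^k * (1-x)^(3*k) = x powr real k * (1 - x) powr real (3*k)"
      using powr_realpow[of x k] powr_realpow[of "1-x" "3*k"] by simp
  qed auto
  have "Beta (real k + 1) (real (3*k) + 1) = fact k * fact (3*k) / fact (4*k+1)"
    unfolding Beta_def
    using Gamma_fact[of k, where 'a=real] Gamma_fact[of "3*k", where 'a=real] Gamma_fact[of "4*k+1", where 'a=real]
    by (simp add: add_ac)
  also have "\<dots> = 1 / ((4*real k+1) * real ((4*k) choose k))"
  proof -
    have e1: "real ((4*k) choose k) = fact (4*k) / (fact k * fact (3*k))"
      using binomial_fact[of k "4*k", where 'a=real] by simp
    have e2: "(fact (4*k+1) :: real) = (4*real k+1) * fact (4*k)"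
      by (simp add: fact_Suc[of "4*k"] del: fact_Suc)
    have "(4*real k+1) > 0" by simp
    then show ?thesis unfolding e1 e2 by (simp add: field_simps)
  qed
  finally show ?thesis using i by simp
qed

definition DD :: "real \<Rightarrow> real" where "DD x = 8 + x*(1-x)^3"
definition AA :: "real \<Rightarrow> real" where "AA x = -30720 + 47104*x - 76600*x^2 + 160176*x^3 - 124560*x^4 + 36544*x^5 - 2040*x^6 + 336*x^7"
definition AA' :: "real \<Rightarrow> real" where "AA' x = 47104 - 2*76600*x + 3*160176*x^2 - 4*124560*x^3 + 5*36544*x^4 - 6*2040*x^5 + 7*336*x^6"
definition DD' :: "real \<Rightarrow> real" where "DD' x = (1-x)^3 - 3*x*(1-x)^2"
definition NN :: "real \<Rightarrow> real" where "NN x = -1726208*x + 5256288*x^2 - 5645278*x^3 + 2897198*x^4 - 1577400*x^5 + 1221240*x^6 - 550404*x^7 + 162084*x^8 - 56280*x^9 + 24120*x^10 - 6030*x^11 + 670*x^12"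
definition tt :: "real \<Rightarrow> real" where "tt x = -(x*(1-x)^3)/8"
definition FF :: "real \<Rightarrow> real" where "FF x = AA x / DD x^2 - 670*x - 192*ln(1+x) + 48*ln(DD x)"

lemma polyid: "(AA' x * DD x - 2 * AA x * DD' x) * (1+x) + (-670 * DD x * (1+x) - 192 * DD x + 48 * DD' x * (1+x)) * DD x ^ 2 = NN x * (1+x)"
  unfolding AA_def AA'_def DD_def DD'_def NN_def by algebra

lemma polyid2: "-8*18675*(x*(1-x)^3)*(8-x*(1-x)^3) - 8*7627*(x*(1-x)^3)*DD x - 670*(x*(1-x)^3)*DD x^2 = NN x"
  unfolding DD_def NN_def by algebra

lemma u_bounds: assumes "x \<in> {0..1::real}" shows "0 \<le> x*(1-x)^3" "x*(1-x)^3 \<le> 1"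
proof -
  have "0 \<le> x" "x \<le> 1" "0 \<le> 1 - x" "1 - x \<le> 1" using assms by auto
  then have "(1-x)^3 \<le> 1" "0 \<le> (1-x)^3" by (auto intro: power_le_one)
  then show "0 \<le> x*(1-x)^3" "x*(1-x)^3 \<le> 1" using \<open>0 \<le> x\<close> \<open>x \<le> 1\<close>
    by (auto intro: mult_le_one)
qed

lemma DD_pos: "x \<in> {0..1} \<Longrightarrow> DD x > 0"
  using u_bounds(1)[of x] unfolding DD_def by linarith

lemma tt_bound: "x \<in> {0..1} \<Longrightarrow> norm (tt x) \<le> 1/8"
  using u_bounds[of x] unfolding tt_def by auto

lemma GG_tt: assumes "x \<in> {0..1}" shows "GG (tt x) = NN x / DD x^3"
proof -
  have p: "DD x > 0" using DD_pos assms .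
  have e: "1 - tt x = DD x / 8" unfolding tt_def DD_def by simp
  show ?thesis unfolding GG_def e
    using p polyid2[of x] apply (simp add: field_simps tt_def)
    apply algebra
    done
qed

lemma dAA: "(AA has_real_derivative AA' x) (at x)"
  unfolding AA_def AA'_def
  apply (rule derivative_eq_intros refl)+
  by (simp add: eval_nat_numeral; algebra)

lemma dDD: "(DD has_real_derivative DD' x) (at x)"
  unfolding DD_def DD'_def
  apply (rule derivative_eq_intros refl)+
  by (simp add: eval_nat_numeral; algebra)

lemma dFF: assumes "x \<in> {0..1}" shows "(FF has_real_derivative NN x / DD x^3) (at x)"
proof -
  have p: "DD x > 0" using DD_pos assms .
  have q: "1 + x > 0" using assms by auto
  show ?thesis
    unfolding FF_def
    apply (rule derivative_eq_intros dAA dDD refl | (use p q in simp; fail))+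
    using p q polyid[of x] apply (simp add: field_simps)
    apply (subgoal_tac "DD x ^ 4 + x * DD x ^ 4 \<noteq> 0")
     apply (simp add: field_simps)
     apply algebra
    using p q by (metis add_pos_pos mult_pos_pos zero_less_power less_irrefl mult_1 distrib_right)
qed

lemma tt_pow: "tt x ^ k = x^k * (1-x)^(3*k) / (-8)^k"
proof -
  have "tt x ^ k = (x*(1-x)^3)^k / (-8)^k" unfolding tt_def
    by (subst power_divide[symmetric]) simp
  then show ?thesis by (simp add: power_mult_distrib power_mult)
qed

lemma aux_div: "a / b * (1 / (c * d)) = (a::real) / (c * b * d)"
  by (simp add: divide_inverse inverse_mult_distrib mult_ac)

lemma term_int: "((\<lambda>x. (18675 * real (Suc n)^2 + 7627 * real (Suc n) + 670) * tt x ^ Suc n) has_integral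
   (let k = real (Suc n) in (18675 * k^2 + 7627 * k + 670) /
            ((4 * k + 1) * (-8) ^ Suc n * real ((4 * Suc n) choose (Suc n))))) {0..1}"
proof -
  define P where "P = 18675 * real (Suc n)^2 + 7627 * real (Suc n) + 670"
  have i1: "((\<lambda>x. (P / (-8)^Suc n) * (x^Suc n * (1-x)^(3*Suc n))) has_integral
     (P / (-8)^Suc n) * (1 / ((4*real (Suc n)+1) * real ((4*Suc n) choose Suc n)))) {0..1}"
    by (rule has_integral_mult_right[OF beta_int])
  have e1: "\<And>x. (P / (-8)^Suc n) * (x^Suc n * (1-x)^(3*Suc n)) = P * tt x ^ Suc n"
    unfolding tt_pow by simp
  have e2: "(P / (-8)^Suc n) * (1 / ((4*real (Suc n)+1) * real ((4*Suc n) choose Suc n))) =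
     (let k = real (Suc n) in (18675 * k^2 + 7627 * k + 670) /
            ((4 * k + 1) * (-8) ^ Suc n * real ((4 * Suc n) choose (Suc n))))"
    unfolding P_def Let_def by (rule aux_div)
  have "((\<lambda>x. P * tt x ^ Suc n) has_integral (let k = real (Suc n) in (18675 * k^2 + 7627 * k + 670) /
            ((4 * k + 1) * (-8) ^ Suc n * real ((4 * Suc n) choose (Suc n))))) {0..1}"
    using i1 by (simp only: e1 e2)
  then show ?thesis unfolding P_def .
qed

theorem lemma3p1:
  shows "(\<lambda>n. let k = real (Suc n) in
            (18675 * k^2 + 7627 * k + 670) /
            ((4 * k + 1) * (-8) ^ Suc n * real ((4 * Suc n) choose (Suc n))))
         sums (-30 - 192 * ln 2)"
proof -
  define a where "a = (\<lambda>n. let k = real (Suc n) in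
            (18675 * k^2 + 7627 * k + 670) /
            ((4 * k + 1) * (-8) ^ Suc n * real ((4 * Suc n) choose (Suc n))))"
  define P where "P n = 18675 * real (Suc n)^2 + 7627 * real (Suc n) + 670" for n
  define f where "f N x = (\<Sum>n<N. P n * tt x ^ Suc n)" for N x
  have fint: "((f N) has_integral (\<Sum>n<N. a n)) {0..1}" for N
    unfolding f_def a_def P_def by (intro has_integral_sum term_int) auto
  define M where "M = GG (1/8)"
  have sP8: "(\<lambda>n. P n * (1/8) ^ Suc n) sums M" using sums_P[of "1/8"] unfolding M_def P_def by simp
  have Pnn: "P n \<ge> 0" for n unfolding P_def by simp
  have bound: "norm (f N x) \<le> M" if "x \<in> {0..1}" for N x
  proof -
    have "norm (f N x) \<le> (\<Sum>n<N. norm (P n * tt x ^ Suc n))"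
      unfolding f_def by (rule norm_sum)
    also have "\<dots> \<le> (\<Sum>n<N. P n * (1/8) ^ Suc n)"
    proof (rule sum_mono)
      fix n
      have "norm (P n * tt x ^ Suc n) = P n * norm (tt x) ^ Suc n"
        using Pnn[of n] by (simp add: abs_mult power_abs)
      also have "\<dots> \<le> P n * (1/8) ^ Suc n"
        by (intro mult_left_mono power_mono tt_bound that Pnn) simp
      finally show "norm (P n * tt x ^ Suc n) \<le> P n * (1/8) ^ Suc n" .
    qed
    also have "\<dots> \<le> M"
      using sum_le_suminf[OF sums_summable[OF sP8], of "{..<N}"] sums_unique[OF sP8] Pnn
      by simp
    finally show ?thesis .
  qed
  have conv: "(\<lambda>N. f N x) \<longlonglongrightarrow> GG (tt x)" if "x \<in> {0..1}" for x
  proof -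
    have "norm (tt x) < 1" using tt_bound[OF that] by simp
    from sums_P[OF this] show ?thesis unfolding f_def sums_def P_def .
  qed
  have dc: "(\<lambda>N. integral {0..1} (f N)) \<longlonglongrightarrow> integral {0..1} (\<lambda>x. GG (tt x))"
    by (rule dominated_convergence(2)[where h="\<lambda>x. M"]) (use fint bound conv in auto)
  have ftc0: "((\<lambda>x. NN x / DD x^3) has_integral (FF 1 - FF 0)) {0..1}"
    by (rule fundamental_theorem_of_calculus)
       (auto simp: has_real_derivative_iff_has_vector_derivative[symmetric]
             intro!: has_field_derivative_at_within dFF)
  have ftc: "((\<lambda>x. GG (tt x)) has_integral (FF 1 - FF 0)) {0..1}"
    by (rule has_integral_spike_finite[of "{}" _ _ "\<lambda>x. NN x / DD x^3", OF _ _ ftc0])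
       (auto simp: GG_tt)
  have "FF 1 - FF 0 = -30 - 192 * ln 2"
  proof -
    have "ln (8::real) = 3 * ln 2"
      using ln_realpow[of 2 3] by simp
    then show ?thesis unfolding FF_def AA_def DD_def by simp
  qed
  with ftc have "integral {0..1} (\<lambda>x. GG (tt x)) = -30 - 192 * ln 2"
    by (simp add: integral_unique)
  moreover have "integral {0..1} (f N) = (\<Sum>n<N. a n)" for N
    using fint by (rule integral_unique)
  ultimately have "(\<lambda>N. \<Sum>n<N. a n) \<longlonglongrightarrow> -30 - 192 * ln 2" using dc by simp
  then show ?thesis unfolding a_def sums_def .
qed

end
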